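(* Let $U$ be a regular region, let $\phi_h\in\Lambda^k_h$ be a solution of the localized discrete Euler--Lagrange equations on $U$, i.e. $dS_U[\phi_h]\cdot v=0$ for all admissible variations $v$ with respect to $U$, and let $V,W\in\mathfrak{X}(\Lambda^k_h)$ be first variations at $\phi_h$. Then $$d\Theta^h_U(\phi_h)\cdot(V,W)=0,$$ where $d$ is the exterior derivative on the finite-dimensional vector space $\Lambda^k_h$.
   Context: $X$ is a bounded $(n+1)$-dimensional polyhedral domain with a metric and finite element triangulation $\mathcal{T}_h$; $H\Lambda^m(X)$: square-integrable $m$-forms with square-integrable exterior derivative. A Lagrangian density $\mathcal{L}$ assigns to $(x,\phi,\psi)$, $\phi\in H\Lambda^k,\psi\in dH\Lambda^k$, an $(n+1)$-form; $j^1\phi=(x,\phi,d\phi)$; $S_U[\phi]=\int_U\mathcal{L}(j^1\phi)$. $\Lambda^k_h\subset H\Lambda^k$ is a finite element space (part of a subcomplex with cochain projections $\pi_h d=d\pi_h$) with a basis of locally supported shape functions associated to mesh nodes; $\mathring{\Lambda}^k_h$: elements with vanishing trace on $\partial X$. A node $i$ is interior to a region $U$ if $U$ contains all simplices touching $i$; $U$ is regular if it equals the union of all simplices touching its interior nodes; admissible variations w.r.t. regular $U$ are $v\in\mathring{\Lambda}^k_h$ with $v|_U$ having vanishing trace on $\partial U$. For $v\in\Lambda^k_h$ restricted to $U$, $v_\partial$ is the part of its expansion in the shape functions having nonzero trace on $\partial U$ and $v_{in}=v-v_\partial$. Vector fields $V\in\mathfrak{X}(\Lambda^k_h)$ are identified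 with maps $\Lambda^k_h\to\Lambda^k_h$, and $V_\partial(\phi):=(V(\phi))_\partial$. The discrete Cartan one-form on $\Lambda^k_h$ is $\Theta^h_U(\phi)\cdot V:=dS_U[\phi]\cdot V_\partial$. A first variation at $\phi_h$ is a vector field $B$ on $\Lambda^k_h$ whose flow preserves the discrete Euler--Lagrange equations, i.e. $d\big(dS_U[\cdot]\cdot A\big)(\phi_h)\cdot B=0$ for every vector field $A$ on $\Lambda^k_h$ taking values in the admissible variations with respect to $U$. *)

theory Defs
  imports "HOL-Analysis.Analysis"
begin

text \<open>The finite element space Lambda^k_h is modelled by a
finite-dimensional real vector space type 'v (euclidean_space).  Bs is the basis of
locally supported shape functions.  trU v is the trace on the boundary of U of the
restriction of v to U, trX v is the trace of v on the boundary of X, resU v is the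
restriction of v to U.\<close>

fun iter_dd :: "('a::real_normed_vector \<Rightarrow> 'b::real_normed_vector) \<Rightarrow> 'a list \<Rightarrow> 'a \<Rightarrow> 'b" where
  "iter_dd f [] = f"
| "iter_dd f (v # vs) = (\<lambda>x. frechet_derivative (iter_dd f vs) (at x) v)"

definition smooth_map :: "('a::real_normed_vector \<Rightarrow> 'b::real_normed_vector) \<Rightarrow> bool" where
  "smooth_map f \<longleftrightarrow> (\<forall>vs x. iter_dd f vs differentiable (at x))"

definition dS :: "('v::real_normed_vector \<Rightarrow> real) \<Rightarrow> 'v \<Rightarrow> 'v \<Rightarrow> real" where
  "dS S \<phi> v = frechet_derivative S (at \<phi>) v"

definition bdry_part :: "'v::euclidean_space set \<Rightarrow> ('v \<Rightarrow> 'w::real_vector) \<Rightarrow> 'v \<Rightarrow> 'v" where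
  "bdry_part Bs trU v =
     (\<Sum>b\<in>{b\<in>Bs. trU b \<noteq> 0}. real_vector.representation Bs v b *\<^sub>R b)"

definition int_part :: "'v::euclidean_space set \<Rightarrow> ('v \<Rightarrow> 'w::real_vector) \<Rightarrow> 'v \<Rightarrow> 'v" where
  "int_part Bs trU v = v - bdry_part Bs trU v"

definition admissible :: "('v \<Rightarrow> 'w::real_vector) \<Rightarrow> ('v \<Rightarrow> 'x::real_vector) \<Rightarrow> 'v \<Rightarrow> bool" where
  "admissible trU trX v \<longleftrightarrow> trX v = 0 \<and> trU v = 0"

text \<open>Regularity of U, in the abstract form it takes on the finite element space:
the interior part of any element agrees on U with an admissible variation
(U is the union of the simplices touching its interior nodes).\<close>
definition regular_region ::
  "'v::euclidean_space set \<Rightarrow> ('v \<Rightarrow> 'w::real_vector) \<Rightarrow> ('v \<Rightarrow> 'x::real_vector)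
     \<Rightarrow> ('v \<Rightarrow> 'r) \<Rightarrow> bool" where
  "regular_region Bs trU trX resU \<longleftrightarrow>
     (\<forall>v. \<exists>w. admissible trU trX w \<and> resU w = resU (int_part Bs trU v))"

definition cartan :: "'v::euclidean_space set \<Rightarrow> ('v \<Rightarrow> 'w::real_vector) \<Rightarrow> ('v \<Rightarrow> real)
     \<Rightarrow> 'v \<Rightarrow> 'v \<Rightarrow> real" where
  "cartan Bs trU S \<phi> X = dS S \<phi> (bdry_part Bs trU X)"

definition ext_d1 :: "('v::real_normed_vector \<Rightarrow> 'v \<Rightarrow> real) \<Rightarrow> 'v \<Rightarrow> 'v \<Rightarrow> 'v \<Rightarrow> real" where
  "ext_d1 \<alpha> \<phi> X Y =
     frechet_derivative (\<lambda>\<psi>. \<alpha> \<psi> Y) (at \<phi>) X - frechet_derivative (\<lambda>\<psi>. \<alpha> \<psi> X) (at \<phi>) Y"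

definition first_variation :: "('v \<Rightarrow> 'w::real_vector) \<Rightarrow> ('v \<Rightarrow> 'x::real_vector)
     \<Rightarrow> ('v::euclidean_space \<Rightarrow> real) \<Rightarrow> 'v \<Rightarrow> ('v \<Rightarrow> 'v) \<Rightarrow> bool" where
  "first_variation trU trX S \<phi>h B \<longleftrightarrow> smooth_map B \<and>
     (\<forall>A. smooth_map A \<and> (\<forall>\<phi>. admissible trU trX (A \<phi>)) \<longrightarrow>
        frechet_derivative (\<lambda>\<phi>. dS S \<phi> (A \<phi>)) (at \<phi>h) (B \<phi>h) = 0)"

end

theory Submission
  imports Defs
begin

lemma line_deriv:
  fixes f :: "'a::real_normed_vector \<Rightarrow> real"
  assumes "\<And>y. (f has_derivative f' y) (at y)"
  shows "((\<lambda>s. f (p + s *\<^sub>R q)) has_real_derivative f' (p + s *\<^sub>R q) q) (at s)"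
proof -
  have l: "((\<lambda>s. p + s *\<^sub>R q) has_derivative (\<lambda>h. h *\<^sub>R q)) (at s)"
    by (auto intro!: derivative_eq_intros)
  have "((\<lambda>s. f (p + s *\<^sub>R q)) has_derivative (\<lambda>h. f' (p + s *\<^sub>R q) (h *\<^sub>R q))) (at s)"
    using has_derivative_compose[OF l assms] by (simp add: o_def)
  moreover have "(\<lambda>h. f' (p + s *\<^sub>R q) (h *\<^sub>R q)) = (*) (f' (p + s *\<^sub>R q) q)"
    using has_derivative_linear[OF assms[of "p + s *\<^sub>R q"]]
    by (simp add: linear_scale fun_eq_iff mult.commute)
  ultimately show ?thesis by (simp add: has_field_derivative_def)
qed

lemma mvt_sq:
  fixes S :: "'a::real_normed_vector \<Rightarrow> real"
  assumes D: "\<And>y. (S has_derivative D y) (at y)"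
    and D2: "\<And>y a. ((\<lambda>z. D z a) has_derivative D2 y a) (at y)"
    and h: "0 < h"
  shows "\<exists>\<sigma> \<tau>. 0 < \<sigma> \<and> \<sigma> < h \<and> 0 < \<tau> \<and> \<tau> < h \<and>
    S (x + h *\<^sub>R u + h *\<^sub>R v) - S (x + h *\<^sub>R u) - S (x + h *\<^sub>R v) + S x
      = h * h * D2 (x + \<sigma> *\<^sub>R u + \<tau> *\<^sub>R v) u v"
proof -
  define k where "k s = S (x + h *\<^sub>R v + s *\<^sub>R u) - S (x + s *\<^sub>R u)" for s
  have dk: "DERIV k s :> D (x + h *\<^sub>R v + s *\<^sub>R u) u - D (x + s *\<^sub>R u) u" for s
    unfolding k_def
    by (intro DERIV_diff line_deriv[where f=S, OF D])
  obtain \<sigma> where \<sigma>: "0 < \<sigma>" "\<sigma> < h"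
    "k h - k 0 = (h - 0) * (D (x + h *\<^sub>R v + \<sigma> *\<^sub>R u) u - D (x + \<sigma> *\<^sub>R u) u)"
    using MVT2[OF h dk] by blast
  define g where "g t = D (x + \<sigma> *\<^sub>R u + t *\<^sub>R v) u" for t
  have dg: "DERIV g t :> D2 (x + \<sigma> *\<^sub>R u + t *\<^sub>R v) u v" for t
    unfolding g_def by (rule line_deriv[where f="\<lambda>z. D z u", OF D2])
  obtain \<tau> where \<tau>: "0 < \<tau>" "\<tau> < h"
    "g h - g 0 = (h - 0) * D2 (x + \<sigma> *\<^sub>R u + \<tau> *\<^sub>R v) u v"
    using MVT2[OF h dg] by blast
  have "S (x + h *\<^sub>R u + h *\<^sub>R v) - S (x + h *\<^sub>R u) - S (x + h *\<^sub>R v) + S x = k h - k 0"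
    unfolding k_def by (simp add: algebra_simps)
  also have "\<dots> = h * (g h - g 0)"
    using \<sigma>(3) unfolding g_def by (simp add: algebra_simps)
  also have "\<dots> = h * h * D2 (x + \<sigma> *\<^sub>R u + \<tau> *\<^sub>R v) u v"
    using \<tau>(3) by simp
  finally show ?thesis using \<sigma> \<tau> by blast
qed

lemma second_sym:
  fixes S :: "'a::real_normed_vector \<Rightarrow> real"
  assumes D: "\<And>y. (S has_derivative D y) (at y)"
    and D2: "\<And>y a. ((\<lambda>z. D z a) has_derivative D2 y a) (at y)"
    and c1: "continuous (at x) (\<lambda>y. D2 y u v)"
    and c2: "continuous (at x) (\<lambda>y. D2 y v u)"
  shows "D2 x u v = D2 x v u"
proof (rule ccontr)
  assume ne: "D2 x u v \<noteq> D2 x v u"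
  define e where "e = \<bar>D2 x u v - D2 x v u\<bar> / 2"
  have e: "e > 0" using ne by (simp add: e_def)
  obtain d1 where d1: "d1 > 0" "\<And>y. dist y x < d1 \<Longrightarrow> dist (D2 y u v) (D2 x u v) < e"
    using c1 e unfolding continuous_at_eps_delta by blast
  obtain d2 where d2: "d2 > 0" "\<And>y. dist y x < d2 \<Longrightarrow> dist (D2 y v u) (D2 x v u) < e"
    using c2 e unfolding continuous_at_eps_delta by blast
  define h where "h = min d1 d2 / (norm u + norm v + 1)"
  have hpos: "h > 0" using d1 d2 unfolding h_def by (intro divide_pos_pos) (auto intro: add_nonneg_pos)
  have hd: "h * (norm u + norm v) < min d1 d2"
  proof -
    have "h * (norm u + norm v) < h * (norm u + norm v + 1)" using hpos by simp
    also have "\<dots> = min d1 d2"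
    proof -
      have "norm u + norm v + 1 > 0" by (auto intro: add_nonneg_pos)
      then show ?thesis unfolding h_def by simp
    qed
    finally show ?thesis .
  qed
  have close: "dist (x + a *\<^sub>R p + b *\<^sub>R q) x < min d1 d2"
    if "0 < a" "a < h" "0 < b" "b < h" "{p, q} = {u, v}" for a b p q
  proof -
    have "dist (x + a *\<^sub>R p + b *\<^sub>R q) x = norm (a *\<^sub>R p + b *\<^sub>R q)"
      by (simp add: dist_norm)
    also have "\<dots> \<le> a * norm p + b * norm q"
      using norm_triangle_ineq[of "a *\<^sub>R p" "b *\<^sub>R q"] that by simp
    also have "\<dots> \<le> h * norm p + h * norm q"
      using that by (intro add_mono mult_right_mono) auto
    also have "\<dots> = h * (norm u + norm v)"
      using that by (auto simp: doubleton_eq_iff algebra_simps)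
    finally show ?thesis using hd by linarith
  qed
  obtain \<sigma> \<tau> where st: "0 < \<sigma>" "\<sigma> < h" "0 < \<tau>" "\<tau> < h"
    "S (x + h *\<^sub>R u + h *\<^sub>R v) - S (x + h *\<^sub>R u) - S (x + h *\<^sub>R v) + S x
      = h * h * D2 (x + \<sigma> *\<^sub>R u + \<tau> *\<^sub>R v) u v"
    using mvt_sq[OF D D2 hpos] by blast
  obtain \<sigma>' \<tau>' where st': "0 < \<sigma>'" "\<sigma>' < h" "0 < \<tau>'" "\<tau>' < h"
    "S (x + h *\<^sub>R v + h *\<^sub>R u) - S (x + h *\<^sub>R v) - S (x + h *\<^sub>R u) + S x
      = h * h * D2 (x + \<sigma>' *\<^sub>R v + \<tau>' *\<^sub>R u) v u"
    using mvt_sq[OF D D2 hpos] by blast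
  have eq: "D2 (x + \<sigma> *\<^sub>R u + \<tau> *\<^sub>R v) u v = D2 (x + \<sigma>' *\<^sub>R v + \<tau>' *\<^sub>R u) v u"
  proof -
    have "h * h * D2 (x + \<sigma> *\<^sub>R u + \<tau> *\<^sub>R v) u v = h * h * D2 (x + \<sigma>' *\<^sub>R v + \<tau>' *\<^sub>R u) v u"
      using st(5) st'(5) by (simp add: algebra_simps)
    then show ?thesis using hpos by simp
  qed
  have a1: "dist (D2 (x + \<sigma> *\<^sub>R u + \<tau> *\<^sub>R v) u v) (D2 x u v) < e"
    using d1(2) close[OF st(1-4), of u v] by simp
  have a2: "dist (D2 (x + \<sigma>' *\<^sub>R v + \<tau>' *\<^sub>R u) v u) (D2 x v u) < e"
    using d2(2) close[OF st'(1-4), of v u] by (simp add: insert_commute)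
  show False using a1 a2 eq unfolding e_def dist_real_def by (simp add: abs_if split: if_splits)
qed

lemma iter_dd_const: "\<exists>c. iter_dd (\<lambda>_. w) vs = (\<lambda>_. c)"
proof (induction vs)
  case Nil then show ?case by auto
next
  case (Cons a vs)
  then obtain c where "iter_dd (\<lambda>_. w) vs = (\<lambda>_. c)" by blast
  then show ?case by auto
qed

lemma smooth_const: "smooth_map (\<lambda>_. w)"
  unfolding smooth_map_def
proof (intro allI)
  fix vs x
  obtain c where "iter_dd (\<lambda>_. w) vs = (\<lambda>_. c)" using iter_dd_const by blast
  then show "iter_dd (\<lambda>_. w) vs differentiable (at x)" by simp
qed

theorem mainTheorem3:
  fixes Bs :: "'v::euclidean_space set"
    and trU :: "'v \<Rightarrow> 'w::real_vector"
    and trX :: "'v \<Rightarrow> 'x::real_vector"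
    and resU :: "'v \<Rightarrow> 'r::real_vector"
    and S :: "'v \<Rightarrow> real"
    and \<phi>h :: 'v
    and V W :: "'v \<Rightarrow> 'v"
  assumes basis: "independent Bs" "span Bs = UNIV"
    and lin: "linear trU" "linear trX" "linear resU"
    and local_S: "\<And>\<phi> \<psi>. resU \<phi> = resU \<psi> \<Longrightarrow> S \<phi> = S \<psi>"
    and smooth_S: "smooth_map S"
    and regular: "regular_region Bs trU trX resU"
    and EL: "\<And>v. admissible trU trX v \<Longrightarrow> dS S \<phi>h v = 0"
    and fvV: "first_variation trU trX S \<phi>h V"
    and fvW: "first_variation trU trX S \<phi>h W"
  shows "ext_d1 (cartan Bs trU S) \<phi>h (V \<phi>h) (W \<phi>h) = 0"
proof -
  define D where "D y = frechet_derivative S (at y)" for y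
  define D2 where "D2 y a = frechet_derivative (\<lambda>z. D z a) (at y)" for y a
  have sdiff: "iter_dd S vs differentiable (at x)" for vs x
    using smooth_S unfolding smooth_map_def by blast
  have hD: "(S has_derivative D y) (at y)" for y
    unfolding D_def using sdiff[of "[]" y] by (simp add: frechet_derivative_works)
  have linD: "linear (D y)" for y using has_derivative_linear[OF hD] .
  have dD: "(\<lambda>z. D z a) differentiable (at y)" for y a
    using sdiff[of "[a]" y] by (simp add: D_def)
  have hD2: "((\<lambda>z. D z a) has_derivative D2 y a) (at y)" for y a
    unfolding D2_def using dD by (simp add: frechet_derivative_works)
  have cD2: "continuous (at x) (\<lambda>y. D2 y a b)" for x a b
  proof -
    have "iter_dd S [b, a] = (\<lambda>y. D2 y a b)" by (simp add: D2_def D_def fun_eq_iff)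
    then show ?thesis using sdiff[of "[b, a]" x] differentiable_imp_continuous_within by metis
  qed
  have sym: "D2 y a b = D2 y b a" for y a b
    by (rule second_sym[OF hD hD2 cD2 cD2])
  have add: "D2 y (a + b) u = D2 y a u + D2 y b u" for y a b u
  proof -
    have "((\<lambda>z. D z a + D z b) has_derivative (\<lambda>u. D2 y a u + D2 y b u)) (at y)"
      by (intro has_derivative_add hD2)
    moreover have "(\<lambda>z. D z a + D z b) = (\<lambda>z. D z (a + b))"
      using linD by (simp add: linear_add fun_eq_iff)
    ultimately have "((\<lambda>z. D z (a + b)) has_derivative (\<lambda>u. D2 y a u + D2 y b u)) (at y)" by simp
    then show ?thesis using hD2 has_derivative_unique by metis
  qed
  have loc: "D2 y d u = 0" if "resU d = 0" for y d u
  proof -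
    have z: "D z d = 0" for z
    proof -
      have "((\<lambda>s. S (z + s *\<^sub>R d)) has_real_derivative D (z + 0 *\<^sub>R d) d) (at 0)"
        by (rule line_deriv[where f=S, OF hD])
      moreover have "(\<lambda>s. S (z + s *\<^sub>R d)) = (\<lambda>s. S z)"
      proof
        fix s
        have "resU (z + s *\<^sub>R d) = resU z"
          using lin(3) that by (simp add: linear_add linear_scale)
        then show "S (z + s *\<^sub>R d) = S z" by (rule local_S)
      qed
      ultimately have "((\<lambda>s. S z) has_real_derivative D z d) (at 0)" by simp
      then show ?thesis using DERIV_const DERIV_unique by metis
    qed
    have "((\<lambda>z. D z d) has_derivative (\<lambda>_. 0)) (at y)" using z by simp
    then show ?thesis using hD2 has_derivative_unique by metis
  qed
  have fv: "D2 \<phi>h w (B \<phi>h) = 0" if "first_variation trU trX S \<phi>h B" "admissible trU trX w" for B w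
  proof -
    have "frechet_derivative (\<lambda>\<phi>. dS S \<phi> ((\<lambda>_. w) \<phi>)) (at \<phi>h) (B \<phi>h) = 0"
      using that smooth_const[of w] unfolding first_variation_def by blast
    then show ?thesis by (simp add: D2_def D_def dS_def)
  qed
  define P where "P = bdry_part Bs trU"
  define I where "I = int_part Bs trU"
  have key: "D2 \<phi>h (P Y) (B \<phi>h) = D2 \<phi>h Y (B \<phi>h)" if "first_variation trU trX S \<phi>h B" for B Y
  proof -
    obtain w where w: "admissible trU trX w" "resU w = resU (I Y)"
      using regular unfolding regular_region_def I_def by blast
    have "D2 \<phi>h Y (B \<phi>h) = D2 \<phi>h (P Y + (w + (I Y - w))) (B \<phi>h)"
      by (simp add: I_def P_def int_part_def)
    also have "\<dots> = D2 \<phi>h (P Y) (B \<phi>h) + (D2 \<phi>h w (B \<phi>h) + D2 \<phi>h (I Y - w) (B \<phi>h))"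
      by (simp only: add)
    also have "D2 \<phi>h w (B \<phi>h) = 0" by (rule fv[OF that w(1)])
    also have "D2 \<phi>h (I Y - w) (B \<phi>h) = 0"
      by (rule loc) (use lin(3) w(2) in \<open>simp add: linear_diff\<close>)
    finally show ?thesis by simp
  qed
  have "ext_d1 (cartan Bs trU S) \<phi>h (V \<phi>h) (W \<phi>h)
      = D2 \<phi>h (P (W \<phi>h)) (V \<phi>h) - D2 \<phi>h (P (V \<phi>h)) (W \<phi>h)"
    by (simp add: ext_d1_def cartan_def dS_def D2_def D_def P_def)
  also have "\<dots> = D2 \<phi>h (W \<phi>h) (V \<phi>h) - D2 \<phi>h (V \<phi>h) (W \<phi>h)"
    using key[OF fvV] key[OF fvW] by simp
  also have "\<dots> = 0" using sym by simp
  finally show ?thesis .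
qed

end
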